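(* Assume $N\ge2$, $\mathcal{G}_u$ connected and Assumption 1. Let $A=[A_1;A_2]\in\mathbb{R}^{4EM\times NM}$ and $B=[-I_{2EM};-I_{2EM}]$, $f(x)=\sum_i f_i(x_i)$. Consider the iteration: given $x^0\in\mathbb{R}^{NM}$, set $x^0_{[Q]}=Q(x^0)$, $z_Q^0=\tfrac12M_+^Tx^0_{[Q]}$, and $\lambda_Q^0=[\beta_Q^0;\gamma_Q^0]$ with $\gamma_Q^0=-\beta_Q^0$; for $k\ge0$ let $x^{k+1}$ be the minimizer of $f(x)+(\lambda_Q^k)^T(Ax+Bz_Q^k)+\tfrac{\rho}{2}\|Ax+Bz_Q^k\|_2^2$, $x^{k+1}_{[Q]}=Q(x^{k+1})$, $z_Q^{k+1}$ the solution of $B^T\lambda_Q^k+\rho B^T(Ax^{k+1}_{[Q]}+Bz_Q^{k+1})=0$, and $\lambda_Q^{k+1}=\lambda_Q^k+\rho(Ax^{k+1}_{[Q]}+Bz_Q^{k+1})$, where $\lambda_Q^k=[\beta_Q^k;\gamma_Q^k]$ with $\beta_Q^k,\gamma_Q^k\in\mathbb{R}^{2EM}$. Then for all $k\ge0$: $\gamma_Q^k=-\beta_Q^k$, $z_Q^k=\tfrac12M_+^Tx^k_{[Q]}$, and, with $\alpha_Q^k:=M_-\beta_Q^k$, the pair $(x^k,\alpha_Q^k)$ satisfies $0\in\partial f(x^{k+1})+2\rho Wx^{k+1}+\alpha_Q^k-\rho L_+x^k_{[Q]}$ and $\alpha_Q^{k+1}=\alpha_Q^k+\rho L_-x^{k+1}_{[Q]}$;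 that is, it coincides with the QC-ADMM iteration started from $x^0$ and $\alpha_Q^0=M_-\beta_Q^0$.
   Context: Network and matrices: $\mathcal{G}_u$ is an undirected graph with vertices $\{1,\dots,N\}$ and $E$ edges; $\mathcal{N}_i$ is the neighbor set of $i$. Each edge $\{i,j\}$ gives arcs $(i,j),(j,i)$, enumerated $q=1,\dots,2E$. Fix $M\ge1$. $A_1,A_2\in\mathbb{R}^{2EM\times NM}$ consist of $2E\times N$ blocks of size $M\times M$: if arc $q$ is $(i,j)$, the $(q,i)$ block of $A_1$ and the $(q,j)$ block of $A_2$ are $I_M$, other blocks zero. $M_+=A_1^T+A_2^T$, $M_-=A_1^T-A_2^T$, $L_+=\tfrac12M_+M_+^T$, $L_-=\tfrac12M_-M_-^T$, and $W$ is block diagonal with $i$th diagonal block $|\mathcal{N}_i|I_M$. Vectors in $\mathbb{R}^{NM}$ are $x=[x_1;\dots;x_N]$, $x_i\in\mathbb{R}^M$. Assumption 1: each $f_i:\mathbb{R}^M\to\mathbb{R}\cup\{\infty\}$ is proper, closed and convex, has a subgradient wherever finite, and $\min\sum_if_i$ is attained. Quantizer: $\Delta>0$; the scalar rounding quantizer is $Q(y)=t\Delta$ if $(t-\tfrac12)\Delta\le y<(t+\tfrac12)\Delta$, $t\in\mathbb{Z}$; for vectors it acts entrywise, and $w_{[Q]}=Q(w)$. $\rho>0$ is fixed. *)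

theory Defs
  imports "Jordan_Normal_Form.Matrix" "HOL-Library.Extended_Real" "HOL-Library.Liminf_Limsup"
begin

(* Vertices are 0..N-1 (the paper's 1..N shifted by one). Vectors in R^{NM} are flattened:
   entry m (0-based) of block i is at index i*M + m. *)

definition graph_with_arcs :: "nat \<Rightarrow> (nat \<Rightarrow> nat \<Rightarrow> bool) \<Rightarrow> (nat \<times> nat) list \<Rightarrow> bool" where
  "graph_with_arcs N adj arcs \<longleftrightarrow>
     (\<forall>i j. adj i j \<longrightarrow> i < N \<and> j < N) \<and>
     (\<forall>i j. adj i j \<longrightarrow> adj j i) \<and>
     (\<forall>i. \<not> adj i i) \<and>
     distinct arcs \<and> set arcs = {(i, j). adj i j}"

definition connected_graph :: "nat \<Rightarrow> (nat \<Rightarrow> nat \<Rightarrow> bool) \<Rightarrow> bool" where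
  "connected_graph N adj \<longleftrightarrow> (\<forall>i<N. \<forall>j<N. adj\<^sup>*\<^sup>* i j)"

definition nbrs :: "nat \<Rightarrow> (nat \<Rightarrow> nat \<Rightarrow> bool) \<Rightarrow> nat \<Rightarrow> nat set" where
  "nbrs N adj i = {j. j < N \<and> adj i j}"

text \<open>A_1, A_2: (2EM) x (NM), block (q,i) of A_1 is I_M iff arc q = (i,j); block (q,j) of A_2 is I_M.\<close>
definition A1mat :: "nat \<Rightarrow> nat \<Rightarrow> (nat \<times> nat) list \<Rightarrow> real mat" where
  "A1mat N M arcs = mat (length arcs * M) (N * M)
     (\<lambda>(r, c). if fst (arcs ! (r div M)) = c div M \<and> r mod M = c mod M then 1 else 0)"

definition A2mat :: "nat \<Rightarrow> nat \<Rightarrow> (nat \<times> nat) list \<Rightarrow> real mat" where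
  "A2mat N M arcs = mat (length arcs * M) (N * M)
     (\<lambda>(r, c). if snd (arcs ! (r div M)) = c div M \<and> r mod M = c mod M then 1 else 0)"

definition Mplus :: "nat \<Rightarrow> nat \<Rightarrow> (nat \<times> nat) list \<Rightarrow> real mat" where
  "Mplus N M arcs = transpose_mat (A1mat N M arcs) + transpose_mat (A2mat N M arcs)"

definition Mminus :: "nat \<Rightarrow> nat \<Rightarrow> (nat \<times> nat) list \<Rightarrow> real mat" where
  "Mminus N M arcs = transpose_mat (A1mat N M arcs) - transpose_mat (A2mat N M arcs)"

definition Lplus :: "nat \<Rightarrow> nat \<Rightarrow> (nat \<times> nat) list \<Rightarrow> real mat" where
  "Lplus N M arcs = (1/2) \<cdot>\<^sub>m (Mplus N M arcs * transpose_mat (Mplus N M arcs))"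

definition Lminus :: "nat \<Rightarrow> nat \<Rightarrow> (nat \<times> nat) list \<Rightarrow> real mat" where
  "Lminus N M arcs = (1/2) \<cdot>\<^sub>m (Mminus N M arcs * transpose_mat (Mminus N M arcs))"

definition Wmat :: "nat \<Rightarrow> nat \<Rightarrow> (nat \<Rightarrow> nat \<Rightarrow> bool) \<Rightarrow> real mat" where
  "Wmat N M adj = mat (N * M) (N * M)
     (\<lambda>(r, c). if r = c then real (card (nbrs N adj (r div M))) else 0)"

definition Amat :: "nat \<Rightarrow> nat \<Rightarrow> (nat \<times> nat) list \<Rightarrow> real mat" where
  "Amat N M arcs = A1mat N M arcs @\<^sub>r A2mat N M arcs"

definition Bmat :: "nat \<Rightarrow> (nat \<times> nat) list \<Rightarrow> real mat" where
  "Bmat M arcs = (- 1\<^sub>m (length arcs * M)) @\<^sub>r (- 1\<^sub>m (length arcs * M))"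

definition blk :: "nat \<Rightarrow> real vec \<Rightarrow> nat \<Rightarrow> real vec" where
  "blk M x i = vec M (\<lambda>m. x $ (i * M + m))"

definition fsum :: "nat \<Rightarrow> nat \<Rightarrow> (nat \<Rightarrow> real vec \<Rightarrow> ereal) \<Rightarrow> real vec \<Rightarrow> ereal" where
  "fsum N M f x = (\<Sum>i<N. f i (blk M x i))"

definition Qs :: "real \<Rightarrow> real \<Rightarrow> real" where
  "Qs \<Delta> y = \<Delta> * of_int \<lfloor>y / \<Delta> + 1/2\<rfloor>"

definition Qv :: "real \<Rightarrow> real vec \<Rightarrow> real vec" where
  "Qv \<Delta> w = map_vec (Qs \<Delta>) w"

definition proper_fun :: "nat \<Rightarrow> (real vec \<Rightarrow> ereal) \<Rightarrow> bool" where
  "proper_fun n g \<longleftrightarrow> (\<forall>x\<in>carrier_vec n. g x \<noteq> -\<infinity>) \<and> (\<exists>x\<in>carrier_vec n. g x \<noteq> \<infinity>)"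

definition convex_fun :: "nat \<Rightarrow> (real vec \<Rightarrow> ereal) \<Rightarrow> bool" where
  "convex_fun n g \<longleftrightarrow> (\<forall>x\<in>carrier_vec n. \<forall>y\<in>carrier_vec n. \<forall>t::real. 0 < t \<and> t < 1 \<longrightarrow>
      g (t \<cdot>\<^sub>v x + (1 - t) \<cdot>\<^sub>v y) \<le> ereal t * g x + ereal (1 - t) * g y)"

text \<open>Closed = lower semicontinuous (sequential characterisation on R^n).\<close>
definition closed_fun :: "nat \<Rightarrow> (real vec \<Rightarrow> ereal) \<Rightarrow> bool" where
  "closed_fun n g \<longleftrightarrow> (\<forall>xs x. (\<forall>k. xs k \<in> carrier_vec n) \<longrightarrow> x \<in> carrier_vec n \<longrightarrow>
      (\<forall>j<n. (\<lambda>k. xs k $ j) \<longlonglongrightarrow> x $ j) \<longrightarrow> g x \<le> liminf (\<lambda>k. g (xs k)))"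

definition subdiff :: "nat \<Rightarrow> (real vec \<Rightarrow> ereal) \<Rightarrow> real vec \<Rightarrow> real vec set" where
  "subdiff n g x = {v \<in> carrier_vec n. \<forall>y\<in>carrier_vec n. g y \<ge> g x + ereal (v \<bullet> (y - x))}"

definition assumption1 :: "nat \<Rightarrow> nat \<Rightarrow> (nat \<Rightarrow> real vec \<Rightarrow> ereal) \<Rightarrow> bool" where
  "assumption1 N M f \<longleftrightarrow>
     (\<forall>i<N. proper_fun M (f i) \<and> closed_fun M (f i) \<and> convex_fun M (f i) \<and>
        (\<forall>x\<in>carrier_vec M. f i x \<noteq> \<infinity> \<longrightarrow> subdiff M (f i) x \<noteq> {})) \<and>
     (\<exists>x\<in>carrier_vec (N * M). \<forall>y\<in>carrier_vec (N * M). fsum N M f x \<le> fsum N M f y)"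

end

theory Submission
  imports Defs
begin


lemma A1_carrier[simp]: "A1mat N M arcs \<in> carrier_mat (length arcs * M) (N * M)"
  unfolding A1mat_def by auto
lemma A2_carrier[simp]: "A2mat N M arcs \<in> carrier_mat (length arcs * M) (N * M)"
  unfolding A2mat_def by auto
lemma Mplus_carrier[simp]: "Mplus N M arcs \<in> carrier_mat (N * M) (length arcs * M)"
  unfolding Mplus_def by auto
lemma Mminus_carrier[simp]: "Mminus N M arcs \<in> carrier_mat (N * M) (length arcs * M)"
  using A1_carrier[of N M arcs] A2_carrier[of N M arcs] unfolding Mminus_def carrier_mat_def by simp
lemma Lplus_carrier[simp]: "Lplus N M arcs \<in> carrier_mat (N * M) (N * M)"
  using Mplus_carrier[of N M arcs] unfolding Lplus_def carrier_mat_def by simp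
lemma Lminus_carrier[simp]: "Lminus N M arcs \<in> carrier_mat (N * M) (N * M)"
  using Mminus_carrier[of N M arcs] unfolding Lminus_def carrier_mat_def by simp
lemma W_carrier[simp]: "Wmat N M adj \<in> carrier_mat (N * M) (N * M)"
  unfolding Wmat_def by auto
lemma A_carrier[simp]: "Amat N M arcs \<in> carrier_mat (length arcs * M + length arcs * M) (N * M)"
  unfolding Amat_def by auto
lemma B_carrier[simp]: "Bmat M arcs \<in> carrier_mat (length arcs * M + length arcs * M) (length arcs * M)"
  unfolding Bmat_def by auto
lemma Qv_carrier[simp]: "v \<in> carrier_vec n \<Longrightarrow> Qv D v \<in> carrier_vec n"
  unfolding Qv_def by auto

lemma col_append_rows:
  assumes "A \<in> carrier_mat nr1 nc" "B \<in> carrier_mat nr2 nc" "j < nc"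
  shows "col (A @\<^sub>r B) j = col A j @\<^sub>v col B j"
  unfolding append_rows_def using assms by (subst col_four_block_mat(1)) auto

lemma transpose_append_rows_mult:
  fixes A B :: "real mat"
  assumes A: "A \<in> carrier_mat nr1 nc" and B: "B \<in> carrier_mat nr2 nc"
    and u: "u \<in> carrier_vec nr1" and v: "v \<in> carrier_vec nr2"
  shows "transpose_mat (A @\<^sub>r B) *\<^sub>v (u @\<^sub>v v) = transpose_mat A *\<^sub>v u + transpose_mat B *\<^sub>v v"
proof (rule eq_vecI)
  show "dim_vec (transpose_mat (A @\<^sub>r B) *\<^sub>v (u @\<^sub>v v)) = dim_vec (transpose_mat A *\<^sub>v u + transpose_mat B *\<^sub>v v)"
    using A B by (simp add: append_rows_def)
  fix j assume j: "j < dim_vec (transpose_mat A *\<^sub>v u + transpose_mat B *\<^sub>v v)"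
  hence j': "j < nc" using A B by simp
  have "(transpose_mat (A @\<^sub>r B) *\<^sub>v (u @\<^sub>v v)) $ j = col (A @\<^sub>r B) j \<bullet> (u @\<^sub>v v)"
    using A B j' by (simp add: append_rows_def)
  also have "\<dots> = col A j \<bullet> u + col B j \<bullet> v"
    using A B u v j' by (simp add: col_append_rows scalar_prod_append[of _ nr1 _ nr2])
  finally show "(transpose_mat (A @\<^sub>r B) *\<^sub>v (u @\<^sub>v v)) $ j = (transpose_mat A *\<^sub>v u + transpose_mat B *\<^sub>v v) $ j"
    using A B j' by simp
qed

lemma B_mult:
  assumes "z \<in> carrier_vec (length arcs * M)"
  shows "Bmat M arcs *\<^sub>v z = (- z) @\<^sub>v (- z)"
  using assms unfolding Bmat_def
  by (subst mat_mult_append[of _ "length arcs * M" "length arcs * M"]) (auto intro!: eq_vecI)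

lemma BT_mult:
  assumes "u \<in> carrier_vec (length arcs * M)" "v \<in> carrier_vec (length arcs * M)"
  shows "transpose_mat (Bmat M arcs) *\<^sub>v (u @\<^sub>v v) = - u - v"
  using assms unfolding Bmat_def
  by (subst transpose_append_rows_mult[of _ "length arcs * M" "length arcs * M"]) (auto intro!: eq_vecI)

lemma A_mult:
  assumes "y \<in> carrier_vec (N * M)"
  shows "Amat N M arcs *\<^sub>v y = (A1mat N M arcs *\<^sub>v y) @\<^sub>v (A2mat N M arcs *\<^sub>v y)"
  using assms unfolding Amat_def by (rule mat_mult_append[OF A1_carrier A2_carrier])

lemma AT_mult:
  assumes "u \<in> carrier_vec (length arcs * M)" "v \<in> carrier_vec (length arcs * M)"
  shows "transpose_mat (Amat N M arcs) *\<^sub>v (u @\<^sub>v v) = transpose_mat (A1mat N M arcs) *\<^sub>v u + transpose_mat (A2mat N M arcs) *\<^sub>v v"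
  using assms unfolding Amat_def by (rule transpose_append_rows_mult[OF A1_carrier A2_carrier])



lemma count_blocks:
  fixes L M s :: nat
  assumes M: "0 < M" and s: "s < M"
  shows "(\<Sum>r\<in>{0..<L*M}. if P (r div M) \<and> r mod M = s then 1 else (0::real)) = real (card {q. q < L \<and> P q})"
proof -
  have "(\<Sum>r\<in>{0..<L*M}. if P (r div M) \<and> r mod M = s then 1 else (0::real))
      = real (card {r\<in>{0..<L*M}. P (r div M) \<and> r mod M = s})"
    by (simp add: sum.If_cases) (intro arg_cong[where f=card], auto)
  also have "{r\<in>{0..<L*M}. P (r div M) \<and> r mod M = s} = (\<lambda>q. q*M+s) ` {q. q < L \<and> P q}"
  proof (intro equalityI subsetI)
    fix r assume "r \<in> {r\<in>{0..<L*M}. P (r div M) \<and> r mod M = s}"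
    hence r: "r < L*M" "P (r div M)" "r mod M = s" by auto
    have "r div M < L" using r(1) M by (simp add: less_mult_imp_div_less)
    moreover have "r = (r div M) * M + s" using r(3) by (metis div_mult_mod_eq)
    ultimately show "r \<in> (\<lambda>q. q*M+s) ` {q. q < L \<and> P q}" using r(2) by blast
  next
    fix r assume "r \<in> (\<lambda>q. q*M+s) ` {q. q < L \<and> P q}"
    then obtain q where q: "q < L" "P q" "r = q*M+s" by auto
    have "q*M + s < L*M"
    proof -
      have "q*M + s < q*M + M" using s by simp
      also have "\<dots> = (q+1)*M" by simp
      also have "\<dots> \<le> L*M" using q(1) by (intro mult_right_mono) auto
      finally show ?thesis .
    qed
    moreover have "(q*M+s) div M = q" using s M by simp
    moreover have "(q*M+s) mod M = s" using s by simp
    ultimately show "r \<in> {r\<in>{0..<L*M}. P (r div M) \<and> r mod M = s}" using q by auto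
  qed
  also have "card ((\<lambda>q. q*M+s) ` {q. q < L \<and> P q}) = card {q. q < L \<and> P q}"
    using M by (intro card_image inj_onI) auto
  finally show ?thesis .
qed

definition Gm :: "nat \<Rightarrow> nat \<Rightarrow> (nat \<times> nat) list \<Rightarrow> ((nat \<times> nat) \<Rightarrow> nat) \<Rightarrow> real mat" where
  "Gm N M arcs g = mat (length arcs * M) (N * M)
     (\<lambda>(r, c). if g (arcs ! (r div M)) = c div M \<and> r mod M = c mod M then 1 else 0)"

lemma gram_Gm:
  assumes M: "0 < M"
  shows "transpose_mat (Gm N M arcs g) * Gm N M arcs g =
    mat (N * M) (N * M) (\<lambda>(c, c'). if c = c' then real (card {q. q < length arcs \<and> g (arcs ! q) = c div M}) else 0)"
proof (rule eq_matI)
  fix c c' assume c: "c < dim_row (mat (N * M) (N * M) (\<lambda>(c, c'). if c = c' then real (card {q. q < length arcs \<and> g (arcs ! q) = c div M}) else 0))"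
    and c': "c' < dim_col (mat (N * M) (N * M) (\<lambda>(c, c'). if c = c' then real (card {q. q < length arcs \<and> g (arcs ! q) = c div M}) else 0))"
  let ?L = "length arcs"
  have cn: "c < N*M" "c' < N*M" using c c' by auto
  have "(transpose_mat (Gm N M arcs g) * Gm N M arcs g) $$ (c, c') = col (Gm N M arcs g) c \<bullet> col (Gm N M arcs g) c'"
    using cn by (simp add: Gm_def)
  also have "\<dots> = (\<Sum>r\<in>{0..<?L*M}. (if g (arcs ! (r div M)) = c div M \<and> r mod M = c mod M then 1 else 0)
       * (if g (arcs ! (r div M)) = c' div M \<and> r mod M = c' mod M then 1 else (0::real)))"
    using cn by (simp add: Gm_def scalar_prod_def)
  also have "\<dots> = (if c = c' then real (card {q. q < length arcs \<and> g (arcs ! q) = c div M}) else 0)"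
  proof (cases "c = c'")
    case True
    then show ?thesis using count_blocks[OF M, where s="c mod M" and L="?L" and P="\<lambda>q. g (arcs ! q) = c div M"] M
      by (simp add: if_distrib cong: if_cong)
  next
    case False
    have "\<And>r. \<not> ((g (arcs ! (r div M)) = c div M \<and> r mod M = c mod M) \<and> (g (arcs ! (r div M)) = c' div M \<and> r mod M = c' mod M))"
      using False by (metis div_mult_mod_eq)
    then show ?thesis using False by (intro trans[OF sum.neutral]) auto
  qed
  finally show "(transpose_mat (Gm N M arcs g) * Gm N M arcs g) $$ (c, c') = mat (N * M) (N * M) (\<lambda>(c, c'). if c = c' then real (card {q. q < length arcs \<and> g (arcs ! q) = c div M}) else 0) $$ (c, c')"
    using cn by simp
qed (auto simp: Gm_def)



lemma card_out:
  assumes g: "graph_with_arcs N adj arcs"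
  shows "card {q. q < length arcs \<and> fst (arcs ! q) = i} = card (nbrs N adj i)"
proof -
  from g have d: "distinct arcs" and sa: "set arcs = {(i, j). adj i j}" and b: "\<And>i j. adj i j \<Longrightarrow> i < N \<and> j < N"
    unfolding graph_with_arcs_def by auto
  have "bij_betw (\<lambda>q. snd (arcs ! q)) {q. q < length arcs \<and> fst (arcs ! q) = i} (nbrs N adj i)"
  proof (rule bij_betw_imageI)
    show "inj_on (\<lambda>q. snd (arcs ! q)) {q. q < length arcs \<and> fst (arcs ! q) = i}"
    proof (rule inj_onI)
      fix q1 q2 assume q1: "q1 \<in> {q. q < length arcs \<and> fst (arcs ! q) = i}" and q2: "q2 \<in> {q. q < length arcs \<and> fst (arcs ! q) = i}"
        and e: "snd (arcs ! q1) = snd (arcs ! q2)"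
      have "arcs ! q1 = arcs ! q2" using q1 q2 e by (simp add: prod_eq_iff)
      thus "q1 = q2" using d q1 q2 by (simp add: nth_eq_iff_index_eq)
    qed
    show "(\<lambda>q. snd (arcs ! q)) ` {q. q < length arcs \<and> fst (arcs ! q) = i} = nbrs N adj i"
    proof (intro equalityI subsetI)
      fix j assume "j \<in> (\<lambda>q. snd (arcs ! q)) ` {q. q < length arcs \<and> fst (arcs ! q) = i}"
      then obtain q where q: "q < length arcs" "fst (arcs ! q) = i" "j = snd (arcs ! q)" by auto
      have "arcs ! q \<in> set arcs" using q(1) by simp
      hence "adj i j" using sa q by (cases "arcs ! q") auto
      thus "j \<in> nbrs N adj i" using b unfolding nbrs_def by auto
    next
      fix j assume "j \<in> nbrs N adj i"
      hence "(i, j) \<in> set arcs" using sa unfolding nbrs_def by auto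
      then obtain q where "q < length arcs" "arcs ! q = (i, j)" by (auto simp: in_set_conv_nth)
      thus "j \<in> (\<lambda>q. snd (arcs ! q)) ` {q. q < length arcs \<and> fst (arcs ! q) = i}"
        by (intro image_eqI[of _ _ q]) auto
    qed
  qed
  thus ?thesis by (rule bij_betw_same_card)
qed

lemma card_in:
  assumes g: "graph_with_arcs N adj arcs"
  shows "card {q. q < length arcs \<and> snd (arcs ! q) = i} = card (nbrs N adj i)"
proof -
  from g have d: "distinct arcs" and sa: "set arcs = {(i, j). adj i j}" and b: "\<And>i j. adj i j \<Longrightarrow> i < N \<and> j < N"
    and sy: "\<And>i j. adj i j \<Longrightarrow> adj j i"
    unfolding graph_with_arcs_def by auto
  have "bij_betw (\<lambda>q. fst (arcs ! q)) {q. q < length arcs \<and> snd (arcs ! q) = i} (nbrs N adj i)"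
  proof (rule bij_betw_imageI)
    show "inj_on (\<lambda>q. fst (arcs ! q)) {q. q < length arcs \<and> snd (arcs ! q) = i}"
    proof (rule inj_onI)
      fix q1 q2 assume q1: "q1 \<in> {q. q < length arcs \<and> snd (arcs ! q) = i}" and q2: "q2 \<in> {q. q < length arcs \<and> snd (arcs ! q) = i}"
        and e: "fst (arcs ! q1) = fst (arcs ! q2)"
      have "arcs ! q1 = arcs ! q2" using q1 q2 e by (simp add: prod_eq_iff)
      thus "q1 = q2" using d q1 q2 by (simp add: nth_eq_iff_index_eq)
    qed
    show "(\<lambda>q. fst (arcs ! q)) ` {q. q < length arcs \<and> snd (arcs ! q) = i} = nbrs N adj i"
    proof (intro equalityI subsetI)
      fix j assume "j \<in> (\<lambda>q. fst (arcs ! q)) ` {q. q < length arcs \<and> snd (arcs ! q) = i}"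
      then obtain q where q: "q < length arcs" "snd (arcs ! q) = i" "j = fst (arcs ! q)" by auto
      have "arcs ! q \<in> set arcs" using q(1) by simp
      hence "adj j i" using sa q by (cases "arcs ! q") auto
      thus "j \<in> nbrs N adj i" using b sy unfolding nbrs_def by auto
    next
      fix j assume "j \<in> nbrs N adj i"
      hence "(j, i) \<in> set arcs" using sa sy unfolding nbrs_def by auto
      then obtain q where "q < length arcs" "arcs ! q = (j, i)" by (auto simp: in_set_conv_nth)
      thus "j \<in> (\<lambda>q. fst (arcs ! q)) ` {q. q < length arcs \<and> snd (arcs ! q) = i}"
        by (intro image_eqI[of _ _ q]) auto
    qed
  qed
  thus ?thesis by (rule bij_betw_same_card)
qed

lemma A1_gram:
  assumes g: "graph_with_arcs N adj arcs" and M: "0 < M"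
  shows "transpose_mat (A1mat N M arcs) * A1mat N M arcs = Wmat N M adj"
proof -
  have "A1mat N M arcs = Gm N M arcs fst" unfolding A1mat_def Gm_def ..
  hence "transpose_mat (A1mat N M arcs) * A1mat N M arcs = mat (N * M) (N * M) (\<lambda>(c, c'). if c = c' then real (card {q. q < length arcs \<and> fst (arcs ! q) = c div M}) else 0)"
    using gram_Gm[OF M] by simp
  also have "\<dots> = Wmat N M adj" unfolding Wmat_def card_out[OF g] ..
  finally show ?thesis .
qed

lemma A2_gram:
  assumes g: "graph_with_arcs N adj arcs" and M: "0 < M"
  shows "transpose_mat (A2mat N M arcs) * A2mat N M arcs = Wmat N M adj"
proof -
  have "A2mat N M arcs = Gm N M arcs snd" unfolding A2mat_def Gm_def ..
  hence "transpose_mat (A2mat N M arcs) * A2mat N M arcs = mat (N * M) (N * M) (\<lambda>(c, c'). if c = c' then real (card {q. q < length arcs \<and> snd (arcs ! q) = c div M}) else 0)"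
    using gram_Gm[OF M] by simp
  also have "\<dots> = Wmat N M adj" unfolding Wmat_def card_in[OF g] ..
  finally show ?thesis .
qed



lemma idx_lt: "i < N \<Longrightarrow> m < (M::nat) \<Longrightarrow> i * M + m < N * M"
proof -
  assume i: "i < N" and m: "m < M"
  have "i * M + m < i * M + M" using m by simp
  also have "\<dots> = (i+1)*M" by simp
  also have "\<dots> \<le> N * M" using i by (intro mult_right_mono) auto
  finally show ?thesis .
qed

lemma blk_carrier[simp]: "blk M v i \<in> carrier_vec M"
  unfolding blk_def by simp

lemma blk_comb:
  assumes x: "x \<in> carrier_vec (N * M)" and y: "y \<in> carrier_vec (N * M)" and i: "i < N"
  shows "blk M (x + t \<cdot>\<^sub>v (y - x)) i = t \<cdot>\<^sub>v blk M y i + (1 - t) \<cdot>\<^sub>v blk M x i"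
  using x y i idx_lt[OF i] unfolding blk_def by (intro eq_vecI) (auto simp: algebra_simps)

lemma sum_not_minf:
  fixes g :: "'a \<Rightarrow> ereal"
  shows "(\<And>i. i \<in> A \<Longrightarrow> g i \<noteq> -\<infinity>) \<Longrightarrow> sum g A \<noteq> -\<infinity>"
proof (induction A rule: infinite_finite_induct)
  case (insert a A)
  have "g a \<noteq> -\<infinity>" "sum g A \<noteq> -\<infinity>" using insert by auto
  then show ?case using insert(1,2) by (cases "g a"; cases "sum g A") auto
qed auto

lemma fsum_notminf:
  assumes A: "assumption1 N M f" and y: "y \<in> carrier_vec (N * M)"
  shows "fsum N M f y \<noteq> -\<infinity>"
  unfolding fsum_def
proof (rule sum_not_minf)
  fix i assume "i \<in> {..<N}"
  with A show "f i (blk M y i) \<noteq> -\<infinity>" unfolding assumption1_def proper_fun_def by auto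
qed

lemma fsum_fin_exists:
  assumes A: "assumption1 N M f"
  shows "\<exists>y0\<in>carrier_vec (N * M). fsum N M f y0 \<noteq> \<infinity>"
proof -
  have "\<forall>i<N. \<exists>v\<in>carrier_vec M. f i v \<noteq> \<infinity>" using A unfolding assumption1_def proper_fun_def by auto
  then obtain xs where xs: "\<And>i. i < N \<Longrightarrow> xs i \<in> carrier_vec M \<and> f i (xs i) \<noteq> \<infinity>" by metis
  define y0 where "y0 = vec (N * M) (\<lambda>r. xs (r div M) $ (r mod M))"
  have b: "blk M y0 i = xs i" if i: "i < N" for i
    using xs[OF i] idx_lt[OF i] unfolding y0_def blk_def by (intro eq_vecI) auto
  have "fsum N M f y0 \<noteq> \<infinity>" unfolding fsum_def sum_Pinfty using b xs by auto
  thus ?thesis unfolding y0_def by auto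
qed

lemma fsum_conv:
  assumes A: "assumption1 N M f" and x: "x \<in> carrier_vec (N * M)" and y: "y \<in> carrier_vec (N * M)"
    and fx: "fsum N M f x \<noteq> \<infinity>" and fy: "fsum N M f y \<noteq> \<infinity>" and t: "0 < t" "t < 1"
  shows "fsum N M f (x + t \<cdot>\<^sub>v (y - x)) \<le> ereal (t * real_of_ereal (fsum N M f y) + (1 - t) * real_of_ereal (fsum N M f x))"
proof -
  have fin: "\<bar>f i (blk M v i)\<bar> \<noteq> \<infinity>" if i: "i < N" and v: "v \<in> carrier_vec (N * M)" "fsum N M f v \<noteq> \<infinity>" for i v
  proof -
    have "f i (blk M v i) \<noteq> \<infinity>" using v(2) i unfolding fsum_def sum_Pinfty by auto
    moreover have "f i (blk M v i) \<noteq> -\<infinity>" using A i unfolding assumption1_def proper_fun_def by auto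
    ultimately show ?thesis by auto
  qed
  define a where "a i = real_of_ereal (f i (blk M y i))" for i
  define b where "b i = real_of_ereal (f i (blk M x i))" for i
  have ea: "f i (blk M y i) = ereal (a i)" if "i < N" for i using fin[OF that y fy] unfolding a_def by (cases "f i (blk M y i)") auto
  have eb: "f i (blk M x i) = ereal (b i)" if "i < N" for i using fin[OF that x fx] unfolding b_def by (cases "f i (blk M x i)") auto
  have sy: "fsum N M f y = ereal (\<Sum>i<N. a i)" unfolding fsum_def using ea by simp
  have sx: "fsum N M f x = ereal (\<Sum>i<N. b i)" unfolding fsum_def using eb by simp
  have "fsum N M f (x + t \<cdot>\<^sub>v (y - x)) = (\<Sum>i<N. f i (t \<cdot>\<^sub>v blk M y i + (1 - t) \<cdot>\<^sub>v blk M x i))"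
    unfolding fsum_def using blk_comb[OF x y] by simp
  also have "\<dots> \<le> (\<Sum>i<N. ereal (t * a i + (1 - t) * b i))"
  proof (rule sum_mono)
    fix i assume i: "i \<in> {..<N}"
    have "convex_fun M (f i)" using A i unfolding assumption1_def by auto
    hence "f i (t \<cdot>\<^sub>v blk M y i + (1 - t) \<cdot>\<^sub>v blk M x i) \<le> ereal t * f i (blk M y i) + ereal (1 - t) * f i (blk M x i)"
      unfolding convex_fun_def using t by auto
    also have "\<dots> = ereal (t * a i + (1 - t) * b i)" using ea eb i by simp
    finally show "f i (t \<cdot>\<^sub>v blk M y i + (1 - t) \<cdot>\<^sub>v blk M x i) \<le> ereal (t * a i + (1 - t) * b i)" .
  qed
  also have "\<dots> = ereal (t * (\<Sum>i<N. a i) + (1 - t) * (\<Sum>i<N. b i))"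
    by (simp add: sum.distrib sum_distrib_left)
  finally show ?thesis using sx sy by simp
qed



lemma lim_nonneg:
  fixes K C :: real
  assumes h: "\<And>t. 0 < t \<Longrightarrow> t < 1 \<Longrightarrow> 0 \<le> K + t * C" and C: "0 \<le> C"
  shows "0 \<le> K"
proof (rule ccontr)
  assume K: "\<not> 0 \<le> K"
  define t where "t = min (1/2) (- K / (2 * (C + 1)))"
  have t0: "0 < t" using K C unfolding t_def by (auto simp: field_simps)
  have t1: "t < 1" unfolding t_def by auto
  have "t * C \<le> (- K / (2 * (C + 1))) * C" unfolding t_def using C by (intro mult_right_mono) auto
  also have "\<dots> = (- K / 2) * (C / (C + 1))" using C by (simp add: field_simps)
  also have "\<dots> \<le> (- K / 2) * 1" using K C by (intro mult_left_mono) auto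
  finally have "K + t * C < 0" using K by linarith
  with h[OF t0 t1] show False by linarith
qed

lemma subgrad_of_min:
  fixes F :: "real vec \<Rightarrow> ereal" and H C :: "real vec \<Rightarrow> real"
  assumes x: "x \<in> carrier_vec n" and v: "v \<in> carrier_vec n"
    and notminf: "\<And>y. y \<in> carrier_vec n \<Longrightarrow> F y \<noteq> -\<infinity>"
    and xfin: "F x \<noteq> \<infinity>"
    and conv: "\<And>y t. y \<in> carrier_vec n \<Longrightarrow> F y \<noteq> \<infinity> \<Longrightarrow> 0 < t \<Longrightarrow> t < 1 \<Longrightarrow>
        F (x + t \<cdot>\<^sub>v (y - x)) \<le> ereal (t * real_of_ereal (F y) + (1 - t) * real_of_ereal (F x))"
    and mn: "\<And>y. y \<in> carrier_vec n \<Longrightarrow> F x + ereal (H x) \<le> F y + ereal (H y)"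
    and Hexp: "\<And>d t. d \<in> carrier_vec n \<Longrightarrow> H (x + t \<cdot>\<^sub>v d) = H x + t * (v \<bullet> d) + t^2 * C d"
    and Cnn: "\<And>d. d \<in> carrier_vec n \<Longrightarrow> 0 \<le> C d"
  shows "- v \<in> subdiff n F x"
  unfolding subdiff_def
proof (intro CollectI conjI ballI)
  show "- v \<in> carrier_vec n" using v by simp
  fix y :: "real vec" assume y: "y \<in> carrier_vec n"
  show "F x + ereal (- v \<bullet> (y - x)) \<le> F y"
  proof (cases "F y = \<infinity>")
    case True then show ?thesis by simp
  next
    case False
    define a where "a = real_of_ereal (F x)"
    define b where "b = real_of_ereal (F y)"
    have Fx: "F x = ereal a" using xfin notminf[OF x] unfolding a_def by (cases "F x") auto
    have Fy: "F y = ereal b" using False notminf[OF y] unfolding b_def by (cases "F y") auto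
    define d where "d = y - x"
    have d: "d \<in> carrier_vec n" using x y unfolding d_def by simp
    have key: "0 \<le> (b - a + v \<bullet> d) + t * C d" if t: "0 < t" "t < 1" for t
    proof -
      define p where "p = x + t \<cdot>\<^sub>v d"
      have p: "p \<in> carrier_vec n" using x d unfolding p_def by simp
      have Fp: "F p \<le> ereal (t * b + (1 - t) * a)"
        using conv[OF y False t] unfolding p_def d_def a_def b_def .
      obtain c where c: "F p = ereal c" using notminf[OF p] Fp by (cases "F p") auto
      have cle: "c \<le> t * b + (1 - t) * a" using Fp c by simp
      have "ereal (a + H x) \<le> ereal (c + H p)" using mn[OF p] Fx c by simp
      hence "a + H x \<le> c + H p" by simp
      also have "H p = H x + t * (v \<bullet> d) + t^2 * C d" unfolding p_def by (rule Hexp[OF d])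
      finally have "0 \<le> t * ((b - a + v \<bullet> d) + t * C d)" using cle by (simp add: algebra_simps power2_eq_square)
      thus ?thesis using t by (simp add: zero_le_mult_iff)
    qed
    have "0 \<le> b - a + v \<bullet> d" by (rule lim_nonneg[OF key Cnn[OF d]])
    moreover have "- v \<bullet> (y - x) = - (v \<bullet> d)" using v x unfolding d_def by (intro scalar_prod_uminus_left) simp
    ultimately show ?thesis using Fx Fy by simp
  qed
qed





lemmas dims[simp] = carrier_matD[OF A1_carrier] carrier_matD[OF A2_carrier] carrier_matD[OF Mplus_carrier]
  carrier_matD[OF Mminus_carrier] carrier_matD[OF Lplus_carrier] carrier_matD[OF Lminus_carrier] carrier_matD[OF W_carrier]

lemma mv_carrier: "A \<in> carrier_mat nr nc \<Longrightarrow> A *\<^sub>v v \<in> carrier_vec nr"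
  by (rule carrier_vecI) (simp add: carrier_matD)

lemma mvc0[simp]: "A1mat N M arcs *\<^sub>v y \<in> carrier_vec (length arcs * M)"
  by (rule carrier_vecI) simp

lemma mvc1[simp]: "A2mat N M arcs *\<^sub>v y \<in> carrier_vec (length arcs * M)"
  by (rule carrier_vecI) simp

lemma mvc2[simp]: "transpose_mat (A1mat N M arcs) *\<^sub>v w \<in> carrier_vec (N * M)"
  by (rule carrier_vecI) simp

lemma mvc3[simp]: "transpose_mat (A2mat N M arcs) *\<^sub>v w \<in> carrier_vec (N * M)"
  by (rule carrier_vecI) simp

lemma mvc4[simp]: "Mplus N M arcs *\<^sub>v w \<in> carrier_vec (N * M)"
  by (rule carrier_vecI) simp

lemma mvc5[simp]: "Mminus N M arcs *\<^sub>v w \<in> carrier_vec (N * M)"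
  by (rule carrier_vecI) simp

lemma mvc6[simp]: "transpose_mat (Mplus N M arcs) *\<^sub>v y \<in> carrier_vec (length arcs * M)"
  by (rule carrier_vecI) simp

lemma mvc7[simp]: "transpose_mat (Mminus N M arcs) *\<^sub>v y \<in> carrier_vec (length arcs * M)"
  by (rule carrier_vecI) simp

lemma mvc8[simp]: "Lplus N M arcs *\<^sub>v y \<in> carrier_vec (N * M)"
  by (rule carrier_vecI) simp

lemma mvc9[simp]: "Lminus N M arcs *\<^sub>v y \<in> carrier_vec (N * M)"
  by (rule carrier_vecI) simp

lemma mvc10[simp]: "Wmat N M adj *\<^sub>v y \<in> carrier_vec (N * M)"
  by (rule carrier_vecI) simp



lemmas dimsAB[simp] = carrier_matD[OF A_carrier] carrier_matD[OF B_carrier]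

lemma mvA[simp]: "Amat N M arcs *\<^sub>v y \<in> carrier_vec (length arcs * M + length arcs * M)"
  by (rule carrier_vecI) simp
lemma mvB[simp]: "Bmat M arcs *\<^sub>v w \<in> carrier_vec (length arcs * M + length arcs * M)"
  by (rule carrier_vecI) simp
lemma mvAT[simp]: "transpose_mat (Amat N M arcs) *\<^sub>v u \<in> carrier_vec (N * M)"
  by (rule carrier_vecI) simp

lemma mv_uminus: "v \<in> carrier_vec (dim_col A) \<Longrightarrow> (A :: real mat) *\<^sub>v (- v) = - (A *\<^sub>v v)"
proof (rule eq_vecI)
  fix i assume v: "v \<in> carrier_vec (dim_col A)" and i: "i < dim_vec (- (A *\<^sub>v v))"
  hence i': "i < dim_row A" by simp
  have "(A *\<^sub>v (- v)) $ i = row A i \<bullet> (- v)" using i' by simp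
  also have "\<dots> = - (row A i \<bullet> v)" using v by (intro scalar_prod_uminus_right) simp
  finally show "(A *\<^sub>v (- v)) $ i = (- (A *\<^sub>v v)) $ i" using i' by simp
qed simp

lemma smult_mat_mv: "dim_vec v = dim_col A \<Longrightarrow> (c \<cdot>\<^sub>m (A :: real mat)) *\<^sub>v v = c \<cdot>\<^sub>v (A *\<^sub>v v)"
proof (rule eq_vecI)
  fix i assume v: "dim_vec v = dim_col A" and i: "i < dim_vec (c \<cdot>\<^sub>v (A *\<^sub>v v))"
  hence i': "i < dim_row A" by simp
  have "row (c \<cdot>\<^sub>m A) i = c \<cdot>\<^sub>v row A i" using i' by (intro eq_vecI) auto
  hence "((c \<cdot>\<^sub>m A) *\<^sub>v v) $ i = (c \<cdot>\<^sub>v row A i) \<bullet> v" using i' by simp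
  also have "\<dots> = c * (row A i \<bullet> v)" using v by (intro scalar_prod_smult_left) simp
  finally show "((c \<cdot>\<^sub>m A) *\<^sub>v v) $ i = (c \<cdot>\<^sub>v (A *\<^sub>v v)) $ i" using i' by simp
qed simp

lemma sp_self_nonneg: "0 \<le> (v :: real vec) \<bullet> v"
  unfolding scalar_prod_def by (intro sum_nonneg) auto

lemma smult_append: "a \<cdot>\<^sub>v (u @\<^sub>v v) = (a \<cdot>\<^sub>v u) @\<^sub>v (a \<cdot>\<^sub>v v)"
  by (intro eq_vecI) auto

lemma vec_first_app: "u \<in> carrier_vec n \<Longrightarrow> vec_first (u @\<^sub>v v) n = u"
  unfolding vec_first_def by (intro eq_vecI) auto

lemma vec_last_app: "v \<in> carrier_vec n \<Longrightarrow> vec_last (u @\<^sub>v v) n = v"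
  unfolding vec_last_def by (intro eq_vecI) auto

theorem mainTheorem3:
  fixes N M :: nat and adj :: "nat \<Rightarrow> nat \<Rightarrow> bool" and arcs :: "(nat \<times> nat) list"
    and f :: "nat \<Rightarrow> real vec \<Rightarrow> ereal" and \<Delta> \<rho> :: real
    and x z lam :: "nat \<Rightarrow> real vec"
  assumes N2: "N \<ge> 2" and M1: "M \<ge> 1"
    and graph: "graph_with_arcs N adj arcs" and conn: "connected_graph N adj"
    and A1: "assumption1 N M f"
    and Delta: "\<Delta> > 0" and rho: "\<rho> > 0"
    and x_dim: "\<And>k. x k \<in> carrier_vec (N * M)"
    and z_dim: "\<And>k. z k \<in> carrier_vec (length arcs * M)"
    and lam_dim: "\<And>k. lam k \<in> carrier_vec (2 * (length arcs * M))"
    and z0: "z 0 = (1/2) \<cdot>\<^sub>v (transpose_mat (Mplus N M arcs) *\<^sub>v Qv \<Delta> (x 0))"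
    and lam0: "vec_last (lam 0) (length arcs * M) = - vec_first (lam 0) (length arcs * M)"
    and x_step: "\<And>k y. y \<in> carrier_vec (N * M) \<Longrightarrow>
       fsum N M f (x (Suc k)) + ereal (lam k \<bullet> (Amat N M arcs *\<^sub>v x (Suc k) + Bmat M arcs *\<^sub>v z k)
          + \<rho> / 2 * ((Amat N M arcs *\<^sub>v x (Suc k) + Bmat M arcs *\<^sub>v z k) \<bullet>
                      (Amat N M arcs *\<^sub>v x (Suc k) + Bmat M arcs *\<^sub>v z k)))
       \<le> fsum N M f y + ereal (lam k \<bullet> (Amat N M arcs *\<^sub>v y + Bmat M arcs *\<^sub>v z k)
          + \<rho> / 2 * ((Amat N M arcs *\<^sub>v y + Bmat M arcs *\<^sub>v z k) \<bullet>
                      (Amat N M arcs *\<^sub>v y + Bmat M arcs *\<^sub>v z k)))"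
    and z_step: "\<And>k. transpose_mat (Bmat M arcs) *\<^sub>v lam k
       + \<rho> \<cdot>\<^sub>v (transpose_mat (Bmat M arcs) *\<^sub>v
            (Amat N M arcs *\<^sub>v Qv \<Delta> (x (Suc k)) + Bmat M arcs *\<^sub>v z (Suc k)))
       = 0\<^sub>v (length arcs * M)"
    and lam_step: "\<And>k. lam (Suc k) = lam k
       + \<rho> \<cdot>\<^sub>v (Amat N M arcs *\<^sub>v Qv \<Delta> (x (Suc k)) + Bmat M arcs *\<^sub>v z (Suc k))"
  shows "\<forall>k. vec_last (lam k) (length arcs * M) = - vec_first (lam k) (length arcs * M)
           \<and> z k = (1/2) \<cdot>\<^sub>v (transpose_mat (Mplus N M arcs) *\<^sub>v Qv \<Delta> (x k))
           \<and> (\<exists>g\<in>subdiff (N * M) (fsum N M f) (x (Suc k)).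
                g + (2 * \<rho>) \<cdot>\<^sub>v (Wmat N M adj *\<^sub>v x (Suc k))
                  + Mminus N M arcs *\<^sub>v vec_first (lam k) (length arcs * M)
                  - \<rho> \<cdot>\<^sub>v (Lplus N M arcs *\<^sub>v Qv \<Delta> (x k)) = 0\<^sub>v (N * M))
           \<and> Mminus N M arcs *\<^sub>v vec_first (lam (Suc k)) (length arcs * M)
               = Mminus N M arcs *\<^sub>v vec_first (lam k) (length arcs * M)
                 + \<rho> \<cdot>\<^sub>v (Lminus N M arcs *\<^sub>v Qv \<Delta> (x (Suc k)))"
proof -
  let ?m = "length arcs * M" and ?n = "N * M"
  let ?A1 = "A1mat N M arcs" and ?A2 = "A2mat N M arcs"
  let ?Mp = "Mplus N M arcs" and ?Mm = "Mminus N M arcs"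
  let ?A = "Amat N M arcs" and ?B = "Bmat M arcs"
  have M0: "0 < M" using M1 by simp
  define \<beta> where "\<beta> k = vec_first (lam k) ?m" for k
  define \<gamma> where "\<gamma> k = vec_last (lam k) ?m" for k
  define Q where "Q k = Qv \<Delta> (x k)" for k
  have Qc[simp]: "Q k \<in> carrier_vec ?n" for k unfolding Q_def using x_dim by simp
  have bc[simp]: "\<beta> k \<in> carrier_vec ?m" for k unfolding \<beta>_def by simp
  have gc[simp]: "\<gamma> k \<in> carrier_vec ?m" for k unfolding \<gamma>_def by simp
  have zc[simp]: "z k \<in> carrier_vec ?m" for k by (rule z_dim)
  have xc[simp]: "x k \<in> carrier_vec ?n" for k by (rule x_dim)
  have dz[simp]: "dim_vec (z k) = ?m" "dim_vec (\<beta> k) = ?m" "dim_vec (\<gamma> k) = ?m" "dim_vec (Q k) = ?n" "dim_vec (x k) = ?n" for k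
    using zc[of k] bc[of k] gc[of k] Qc[of k] xc[of k] by (simp_all only: carrier_vec_def mem_Collect_eq)
  have lamsplit: "lam k = \<beta> k @\<^sub>v \<gamma> k" for k
    unfolding \<beta>_def \<gamma>_def using lam_dim[of k] by (simp add: mult_2)
  have MpT: "transpose_mat ?Mp = ?A1 + ?A2"
    unfolding Mplus_def by (subst transpose_add[of _ ?n ?m]) auto
  have MmT: "transpose_mat ?Mm = ?A1 - ?A2"
    unfolding Mminus_def by (subst transpose_minus[of _ ?n ?m]) auto
  have rsplit: "?A *\<^sub>v y + ?B *\<^sub>v w = (?A1 *\<^sub>v y + - w) @\<^sub>v (?A2 *\<^sub>v y + - w)"
    if "y \<in> carrier_vec ?n" "w \<in> carrier_vec ?m" for y w
    unfolding A_mult[OF that(1)] B_mult[OF that(2)] by (rule append_vec_add) (use that in auto)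
  have zS: "z (Suc k) = (1/2) \<cdot>\<^sub>v (?A1 *\<^sub>v Q (Suc k) + ?A2 *\<^sub>v Q (Suc k))" if g: "\<gamma> k = - \<beta> k" for k
  proof -
    have e: "(- \<beta> k - \<gamma> k) + \<rho> \<cdot>\<^sub>v (- (?A1 *\<^sub>v Q (Suc k) + - z (Suc k)) - (?A2 *\<^sub>v Q (Suc k) + - z (Suc k))) = 0\<^sub>v ?m"
      using z_step[of k] unfolding lamsplit Q_def[symmetric]
      by (simp add: rsplit BT_mult)
    show ?thesis
    proof (rule eq_vecI)
      fix i assume "i < dim_vec ((1/2) \<cdot>\<^sub>v (?A1 *\<^sub>v Q (Suc k) + ?A2 *\<^sub>v Q (Suc k)))"
      hence i: "i < ?m" by simp
      have "((- \<beta> k - \<gamma> k) + \<rho> \<cdot>\<^sub>v (- (?A1 *\<^sub>v Q (Suc k) + - z (Suc k)) - (?A2 *\<^sub>v Q (Suc k) + - z (Suc k)))) $ i = 0\<^sub>v ?m $ i"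
        by (simp only: e)
      hence h: "(- \<beta> k $ i - \<gamma> k $ i) + \<rho> * (- ((?A1 *\<^sub>v Q (Suc k)) $ i + - z (Suc k) $ i) - ((?A2 *\<^sub>v Q (Suc k)) $ i + - z (Suc k) $ i)) = 0"
        using i by simp
      have gi: "\<gamma> k $ i = - \<beta> k $ i" using g i by simp
      have "\<rho> * (2 * z (Suc k) $ i - (?A1 *\<^sub>v Q (Suc k)) $ i - (?A2 *\<^sub>v Q (Suc k)) $ i) = 0"
        using h gi by (simp add: algebra_simps)
      hence "2 * z (Suc k) $ i - (?A1 *\<^sub>v Q (Suc k)) $ i - (?A2 *\<^sub>v Q (Suc k)) $ i = 0" using rho by simp
      thus "z (Suc k) $ i = ((1/2) \<cdot>\<^sub>v (?A1 *\<^sub>v Q (Suc k) + ?A2 *\<^sub>v Q (Suc k))) $ i" using i by simp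
    qed simp
  qed
  have lamS: "\<beta> (Suc k) = \<beta> k + \<rho> \<cdot>\<^sub>v (?A1 *\<^sub>v Q (Suc k) + - z (Suc k)) \<and>
              \<gamma> (Suc k) = \<gamma> k + \<rho> \<cdot>\<^sub>v (?A2 *\<^sub>v Q (Suc k) + - z (Suc k))" for k
  proof -
    have "lam (Suc k) = (\<beta> k + \<rho> \<cdot>\<^sub>v (?A1 *\<^sub>v Q (Suc k) + - z (Suc k))) @\<^sub>v (\<gamma> k + \<rho> \<cdot>\<^sub>v (?A2 *\<^sub>v Q (Suc k) + - z (Suc k)))"
      using lam_step[of k] unfolding lamsplit[of k] Q_def[symmetric]
      by (simp add: rsplit smult_append append_vec_add[of _ ?m _ _ ?m])
    thus ?thesis unfolding \<beta>_def \<gamma>_def by (simp add: vec_first_app vec_last_app)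
  qed
  have C12: "\<gamma> k = - \<beta> k \<and> z k = (1/2) \<cdot>\<^sub>v (transpose_mat ?Mp *\<^sub>v Q k)" for k
  proof (induction k)
    case 0
    then show ?case using lam0 z0 unfolding \<beta>_def \<gamma>_def Q_def by simp
  next
    case (Suc k)
    have z': "z (Suc k) = (1/2) \<cdot>\<^sub>v (?A1 *\<^sub>v Q (Suc k) + ?A2 *\<^sub>v Q (Suc k))" using zS Suc by blast
    have "\<gamma> (Suc k) = - \<beta> (Suc k)"
    proof (rule eq_vecI)
      fix i assume "i < dim_vec (- \<beta> (Suc k))"
      hence i: "i < ?m" by simp
      show "\<gamma> (Suc k) $ i = (- \<beta> (Suc k)) $ i"
        using lamS[of k] Suc i unfolding z' by (simp add: algebra_simps)
    qed simp
    moreover have "z (Suc k) = (1/2) \<cdot>\<^sub>v (transpose_mat ?Mp *\<^sub>v Q (Suc k))"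
      unfolding z' MpT by (subst add_mult_distrib_mat_vec[of _ ?m ?n]) auto
    ultimately show ?case by simp
  qed
  have lamc[simp]: "lam k \<in> carrier_vec (?m + ?m)" for k using lam_dim[of k] by (simp add: mult_2)
  have fsx: "fsum N M f (x (Suc k)) \<noteq> \<infinity>" for k
  proof
    assume inf: "fsum N M f (x (Suc k)) = \<infinity>"
    obtain y0 where y0: "y0 \<in> carrier_vec ?n" "fsum N M f y0 \<noteq> \<infinity>" using fsum_fin_exists[OF A1] by blast
    have "fsum N M f y0 \<noteq> -\<infinity>" by (rule fsum_notminf[OF A1 y0(1)])
    then obtain c where c: "fsum N M f y0 = ereal c" using y0(2) by (cases "fsum N M f y0") auto
    show False using x_step[OF y0(1), of k] inf c by simp
  qed
  show ?thesis
  proof (rule allI)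
    fix k
    let ?x' = "x (Suc k)"
    have c1: "vec_last (lam k) (length arcs * M) = - vec_first (lam k) (length arcs * M)"
      using C12[of k] unfolding \<beta>_def \<gamma>_def by simp
    have c2: "z k = (1/2) \<cdot>\<^sub>v (transpose_mat (Mplus N M arcs) *\<^sub>v Qv \<Delta> (x k))"
      using C12[of k] unfolding Q_def by simp
    have gk: "\<gamma> k = - \<beta> k" using C12[of k] by simp
    have c4: "Mminus N M arcs *\<^sub>v vec_first (lam (Suc k)) (length arcs * M)
               = Mminus N M arcs *\<^sub>v vec_first (lam k) (length arcs * M)
                 + \<rho> \<cdot>\<^sub>v (Lminus N M arcs *\<^sub>v Qv \<Delta> (x (Suc k)))"
    proof -
      let ?a = "?A1 *\<^sub>v Q (Suc k)" and ?b = "?A2 *\<^sub>v Q (Suc k)"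
      have z': "z (Suc k) = (1/2) \<cdot>\<^sub>v (?a + ?b)" using zS gk by blast
      have b': "\<beta> (Suc k) = \<beta> k + (\<rho> / 2) \<cdot>\<^sub>v (?a - ?b)"
      proof (rule eq_vecI)
        fix i assume "i < dim_vec (\<beta> k + (\<rho> / 2) \<cdot>\<^sub>v (?a - ?b))"
        hence i: "i < ?m" by simp
        show "\<beta> (Suc k) $ i = (\<beta> k + (\<rho> / 2) \<cdot>\<^sub>v (?a - ?b)) $ i"
          using lamS[of k] i unfolding z' by (simp add: algebra_simps)
      qed simp
      have "?Mm *\<^sub>v \<beta> (Suc k) = ?Mm *\<^sub>v \<beta> k + (\<rho> / 2) \<cdot>\<^sub>v (?Mm *\<^sub>v ?a - ?Mm *\<^sub>v ?b)"
        unfolding b' by (simp add: mult_add_distrib_mat_vec[of _ ?n ?m] mult_mat_vec[of _ ?n ?m] mult_minus_distrib_mat_vec[of _ ?n ?m])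
      moreover have "Lminus N M arcs *\<^sub>v Q (Suc k) = (1/2) \<cdot>\<^sub>v (?Mm *\<^sub>v ?a - ?Mm *\<^sub>v ?b)"
      proof -
        have "?Mm * (?A1 - ?A2) *\<^sub>v Q (Suc k) = ?Mm *\<^sub>v ((?A1 - ?A2) *\<^sub>v Q (Suc k))"
          by (rule assoc_mult_mat_vec[of _ ?n ?m _ ?n]) auto
        also have "\<dots> = ?Mm *\<^sub>v ?a - ?Mm *\<^sub>v ?b"
          by (simp add: minus_mult_distrib_mat_vec[of _ ?m ?n] mult_minus_distrib_mat_vec[of _ ?n ?m])
        finally show ?thesis unfolding Lminus_def by (simp add: smult_mat_mv MmT)
      qed
      ultimately have "?Mm *\<^sub>v \<beta> (Suc k) = ?Mm *\<^sub>v \<beta> k + \<rho> \<cdot>\<^sub>v (Lminus N M arcs *\<^sub>v Q (Suc k))"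
        by (intro eq_vecI) auto
      thus ?thesis unfolding \<beta>_def Q_def .
    qed
    have c3: "\<exists>g\<in>subdiff (N * M) (fsum N M f) (x (Suc k)).
                g + (2 * \<rho>) \<cdot>\<^sub>v (Wmat N M adj *\<^sub>v x (Suc k))
                  + Mminus N M arcs *\<^sub>v vec_first (lam k) (length arcs * M)
                  - \<rho> \<cdot>\<^sub>v (Lplus N M arcs *\<^sub>v Qv \<Delta> (x k)) = 0\<^sub>v (N * M)"
    proof -
      define r where "r = ?A *\<^sub>v ?x' + ?B *\<^sub>v z k"
      define v where "v = transpose_mat ?A *\<^sub>v (lam k + \<rho> \<cdot>\<^sub>v r)"
      define H where "H y = lam k \<bullet> (?A *\<^sub>v y + ?B *\<^sub>v z k) + \<rho> / 2 * ((?A *\<^sub>v y + ?B *\<^sub>v z k) \<bullet> (?A *\<^sub>v y + ?B *\<^sub>v z k))" for y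
      define Cf where "Cf d = \<rho> / 2 * ((?A *\<^sub>v d) \<bullet> (?A *\<^sub>v d))" for d
      have rc[simp]: "r \<in> carrier_vec (?m + ?m)" unfolding r_def by simp
      have dr[simp]: "dim_vec r = ?m + ?m" unfolding r_def by simp
      have vc[simp]: "v \<in> carrier_vec ?n" unfolding v_def by simp
      have Hexp: "H (?x' + t \<cdot>\<^sub>v d) = H ?x' + t * (v \<bullet> d) + t^2 * Cf d" if d: "d \<in> carrier_vec ?n" for d t
      proof -
        define w where "w = ?A *\<^sub>v d"
        have wc[simp]: "w \<in> carrier_vec (?m + ?m)" unfolding w_def by simp
        have dw[simp]: "dim_vec w = ?m + ?m" unfolding w_def by simp
        have e1: "?A *\<^sub>v (?x' + t \<cdot>\<^sub>v d) + ?B *\<^sub>v z k = r + t \<cdot>\<^sub>v w"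
        proof -
          have "?A *\<^sub>v (?x' + t \<cdot>\<^sub>v d) = ?A *\<^sub>v ?x' + t \<cdot>\<^sub>v w"
            unfolding w_def using d by (simp add: mult_add_distrib_mat_vec[of _ "?m+?m" ?n] mult_mat_vec[of _ "?m+?m" ?n])
          thus ?thesis unfolding r_def by (intro eq_vecI) auto
        qed
        have e2: "v \<bullet> d = lam k \<bullet> w + \<rho> * (r \<bullet> w)"
        proof -
          have "v \<bullet> d = (lam k + \<rho> \<cdot>\<^sub>v r) \<bullet> w"
            unfolding v_def w_def by (rule transpose_vec_mult_scalar[OF A_carrier d]) simp
          also have "\<dots> = lam k \<bullet> w + \<rho> * (r \<bullet> w)"
            by (simp add: add_scalar_prod_distrib[of _ "?m+?m"] smult_scalar_prod_distrib[of _ "?m+?m"])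
          finally show ?thesis .
        qed
        have e3: "lam k \<bullet> (r + t \<cdot>\<^sub>v w) = lam k \<bullet> r + t * (lam k \<bullet> w)"
          by (simp add: scalar_prod_add_distrib[of _ "?m+?m"] scalar_prod_smult_distrib[of _ "?m+?m"])
        have e4: "(r + t \<cdot>\<^sub>v w) \<bullet> (r + t \<cdot>\<^sub>v w) = r \<bullet> r + 2 * t * (r \<bullet> w) + t^2 * (w \<bullet> w)"
        proof -
          have "(r + t \<cdot>\<^sub>v w) \<bullet> (r + t \<cdot>\<^sub>v w) = r \<bullet> r + t * (r \<bullet> w) + t * (w \<bullet> r) + t * (t * (w \<bullet> w))"
            by (simp add: scalar_prod_add_distrib[of _ "?m+?m"] add_scalar_prod_distrib[of _ "?m+?m"]
                  scalar_prod_smult_distrib[of _ "?m+?m"] smult_scalar_prod_distrib[of _ "?m+?m"] distrib_left)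
          moreover have "w \<bullet> r = r \<bullet> w" by (rule comm_scalar_prod[of _ "?m+?m"]) auto
          ultimately show ?thesis by (simp add: algebra_simps power2_eq_square)
        qed
        show ?thesis unfolding H_def e1 r_def[symmetric] e3 e4 e2 Cf_def w_def[symmetric]
          by (simp add: algebra_simps power2_eq_square)
      qed
      have sub: "- v \<in> subdiff ?n (fsum N M f) ?x'"
      proof (rule subgrad_of_min[where H = H and C = Cf])
        show "?x' \<in> carrier_vec ?n" by simp
        show "v \<in> carrier_vec ?n" by simp
        show "\<And>y. y \<in> carrier_vec ?n \<Longrightarrow> fsum N M f y \<noteq> -\<infinity>" by (rule fsum_notminf[OF A1])
        show "fsum N M f ?x' \<noteq> \<infinity>" by (rule fsx)
        show "\<And>y t. y \<in> carrier_vec ?n \<Longrightarrow> fsum N M f y \<noteq> \<infinity> \<Longrightarrow> 0 < t \<Longrightarrow> t < 1 \<Longrightarrow>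
          fsum N M f (?x' + t \<cdot>\<^sub>v (y - ?x')) \<le> ereal (t * real_of_ereal (fsum N M f y) + (1 - t) * real_of_ereal (fsum N M f ?x'))"
          by (rule fsum_conv[OF A1 xc _ fsx])
        show "\<And>y. y \<in> carrier_vec ?n \<Longrightarrow> fsum N M f ?x' + ereal (H ?x') \<le> fsum N M f y + ereal (H y)"
          unfolding H_def by (rule x_step)
        show "\<And>d t. d \<in> carrier_vec ?n \<Longrightarrow> H (?x' + t \<cdot>\<^sub>v d) = H ?x' + t * (v \<bullet> d) + t^2 * Cf d"
          by (rule Hexp)
        show "\<And>d. d \<in> carrier_vec ?n \<Longrightarrow> 0 \<le> Cf d"
          unfolding Cf_def using rho sp_self_nonneg by simp
      qed
      let ?T1 = "transpose_mat ?A1" and ?T2 = "transpose_mat ?A2"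
      define w0 where "w0 = transpose_mat ?Mp *\<^sub>v Q k"
      have w0c[simp]: "w0 \<in> carrier_vec ?m" unfolding w0_def by simp
      have zk: "z k = (1/2) \<cdot>\<^sub>v w0" using C12[of k] unfolding w0_def by simp
      have W1: "?T1 *\<^sub>v (?A1 *\<^sub>v ?x') = Wmat N M adj *\<^sub>v ?x'"
        using A1_gram[OF graph M0] by (simp flip: assoc_mult_mat_vec[of _ ?n ?m _ ?n])
      have W2: "?T2 *\<^sub>v (?A2 *\<^sub>v ?x') = Wmat N M adj *\<^sub>v ?x'"
        using A2_gram[OF graph M0] by (simp flip: assoc_mult_mat_vec[of _ ?n ?m _ ?n])
      have lr: "lam k + \<rho> \<cdot>\<^sub>v r = (\<beta> k + \<rho> \<cdot>\<^sub>v (?A1 *\<^sub>v ?x' + - z k)) @\<^sub>v (- \<beta> k + \<rho> \<cdot>\<^sub>v (?A2 *\<^sub>v ?x' + - z k))"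
        unfolding r_def lamsplit[of k] gk rsplit[OF xc zc] smult_append
        by (rule append_vec_add[of _ ?m _ _ ?m]) auto
      have vform: "v = (?T1 *\<^sub>v \<beta> k + \<rho> \<cdot>\<^sub>v (Wmat N M adj *\<^sub>v ?x' + - ((1/2) \<cdot>\<^sub>v (?T1 *\<^sub>v w0))))
                 + (- (?T2 *\<^sub>v \<beta> k) + \<rho> \<cdot>\<^sub>v (Wmat N M adj *\<^sub>v ?x' + - ((1/2) \<cdot>\<^sub>v (?T2 *\<^sub>v w0))))"
        unfolding v_def lr
        by (simp add: AT_mult mult_add_distrib_mat_vec[of _ ?n ?m] mult_mat_vec[of _ ?n ?m] mv_uminus W1 W2 zk)
      have Mmb: "?Mm *\<^sub>v \<beta> k = ?T1 *\<^sub>v \<beta> k - ?T2 *\<^sub>v \<beta> k"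
        unfolding Mminus_def by (rule minus_mult_distrib_mat_vec[of _ ?n ?m]) auto
      have Lpq: "Lplus N M arcs *\<^sub>v Q k = (1/2) \<cdot>\<^sub>v (?T1 *\<^sub>v w0 + ?T2 *\<^sub>v w0)"
      proof -
        have "?Mp * transpose_mat ?Mp *\<^sub>v Q k = ?Mp *\<^sub>v w0"
          unfolding w0_def by (rule assoc_mult_mat_vec[of _ ?n ?m _ ?n]) auto
        also have "?Mp *\<^sub>v w0 = ?T1 *\<^sub>v w0 + ?T2 *\<^sub>v w0"
          unfolding Mplus_def by (rule add_mult_distrib_mat_vec[of _ ?n ?m]) auto
        finally show ?thesis by (simp add: Lplus_def smult_mat_mv)
      qed
      have eq: "- v + (2 * \<rho>) \<cdot>\<^sub>v (Wmat N M adj *\<^sub>v ?x') + ?Mm *\<^sub>v \<beta> k - \<rho> \<cdot>\<^sub>v (Lplus N M arcs *\<^sub>v Q k) = 0\<^sub>v ?n"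
        unfolding vform Mmb Lpq by (intro eq_vecI) (auto simp: algebra_simps)
      show ?thesis using sub eq unfolding \<beta>_def Q_def by blast
    qed

    show "vec_last (lam k) (length arcs * M) = - vec_first (lam k) (length arcs * M)
           \<and> z k = (1/2) \<cdot>\<^sub>v (transpose_mat (Mplus N M arcs) *\<^sub>v Qv \<Delta> (x k))
           \<and> (\<exists>g\<in>subdiff (N * M) (fsum N M f) (x (Suc k)).
                g + (2 * \<rho>) \<cdot>\<^sub>v (Wmat N M adj *\<^sub>v x (Suc k))
                  + Mminus N M arcs *\<^sub>v vec_first (lam k) (length arcs * M)
                  - \<rho> \<cdot>\<^sub>v (Lplus N M arcs *\<^sub>v Qv \<Delta> (x k)) = 0\<^sub>v (N * M))
           \<and> Mminus N M arcs *\<^sub>v vec_first (lam (Suc k)) (length arcs * M)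
               = Mminus N M arcs *\<^sub>v vec_first (lam k) (length arcs * M)
                 + \<rho> \<cdot>\<^sub>v (Lminus N M arcs *\<^sub>v Qv \<Delta> (x (Suc k)))"
      using c1 c2 c3 c4 by blast
  qed
qed

end
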